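(* For any $2\le r\le\infty$, $1\le k\le p+q+1$ and $\theta\in\Theta_\delta$, there exists a constant $K$ such that $\|\dot\lambda^t_k(\theta)\|_{\ell^r}\le K$ for all $t\ge1$.
   Context: Setting: $d_0\in(-1/2,1/2)$; $a(z)=1-\sum_{i=1}^pa_iz^i$, $b(z)=1-\sum_{i=1}^qb_iz^i$ have roots outside the unit disk, no common factors. For $\theta=(\theta_1,\dots,\theta_{p+q},d)$, $a_\theta(z)=1-\sum_{i=1}^p\theta_iz^i$, $b_\theta(z)=1-\sum_{j=1}^q\theta_{p+j}z^j$; $\Theta_\delta=\Theta^*_\delta\times[d_1,d_2]$ where $\Theta^*_\delta$ is the set of $(\theta_1,\dots,\theta_{p+q})$ with all roots of $a_\theta,b_\theta$ of modulus $\ge1+\delta$, $[d_1,d_2]\subset(-1/2,1/2)$, $d_1-d_0>-1/2$, $\theta_0=(a_1,\dots,a_p,b_1,\dots,b_q,d_0)\in\Theta_\delta$. $\gamma(\theta)$: coefficients of $b_\theta^{-1}(z)a_\theta(z)(1-z)^d$; $\eta(\theta_0)$: coefficients of $(1-z)^{-d_0}a_{\theta_0}^{-1}(z)b_{\theta_0}(z)$; $\gamma^t_i(\theta)=\gamma_i(\theta)$ for $i\le t-1$ and $0$ otherwise; $\dot\lambda^t_k(\theta)=\frac{\partial\gamma^t(\theta)}{\partial\theta_k}*\eta(\theta_0)$ (convolution of sequences, $\theta_{p+q+1}=d$). *)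

theory Defs
  imports "HOL-Analysis.Analysis" "HOL-Computational_Algebra.Formal_Power_Series"
begin

(* Parameters theta :: nat => real, with theta 1..theta p the AR part,
   theta (p+1)..theta (p+q) the MA part and theta (p+q+1) = d. *)

definition a_fps :: "nat \<Rightarrow> (nat \<Rightarrow> real) \<Rightarrow> real fps" where
  "a_fps p \<theta> = 1 - Abs_fps (\<lambda>i. if 1 \<le> i \<and> i \<le> p then \<theta> i else 0)"

definition b_fps :: "nat \<Rightarrow> nat \<Rightarrow> (nat \<Rightarrow> real) \<Rightarrow> real fps" where
  "b_fps p q \<theta> = 1 - Abs_fps (\<lambda>j. if 1 \<le> j \<and> j \<le> q then \<theta> (p + j) else 0)"

(* (1 - z)^d as a formal power series (binomial series) *)
definition frac_fps :: "real \<Rightarrow> real fps" where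
  "frac_fps d = Abs_fps (\<lambda>n. (-1) ^ n * (d gchoose n))"

definition a_poly :: "nat \<Rightarrow> (nat \<Rightarrow> real) \<Rightarrow> complex \<Rightarrow> complex" where
  "a_poly p \<theta> z = 1 - (\<Sum>i=1..p. complex_of_real (\<theta> i) * z ^ i)"

definition b_poly :: "nat \<Rightarrow> nat \<Rightarrow> (nat \<Rightarrow> real) \<Rightarrow> complex \<Rightarrow> complex" where
  "b_poly p q \<theta> z = 1 - (\<Sum>j=1..q. complex_of_real (\<theta> (p + j)) * z ^ j)"

definition in_Theta :: "nat \<Rightarrow> nat \<Rightarrow> real \<Rightarrow> real \<Rightarrow> real \<Rightarrow> (nat \<Rightarrow> real) \<Rightarrow> bool" where
  "in_Theta p q \<delta> d1 d2 \<theta> \<longleftrightarrow>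
     (\<forall>z. a_poly p \<theta> z = 0 \<longrightarrow> 1 + \<delta> \<le> cmod z) \<and>
     (\<forall>z. b_poly p q \<theta> z = 0 \<longrightarrow> 1 + \<delta> \<le> cmod z) \<and>
     d1 \<le> \<theta> (p + q + 1) \<and> \<theta> (p + q + 1) \<le> d2"

definition gamma :: "nat \<Rightarrow> nat \<Rightarrow> (nat \<Rightarrow> real) \<Rightarrow> nat \<Rightarrow> real" where
  "gamma p q \<theta> i = fps_nth (inverse (b_fps p q \<theta>) * a_fps p \<theta> * frac_fps (\<theta> (p + q + 1))) i"

definition gamma_t :: "nat \<Rightarrow> nat \<Rightarrow> nat \<Rightarrow> (nat \<Rightarrow> real) \<Rightarrow> nat \<Rightarrow> real" where
  "gamma_t p q t \<theta> i = (if i + 1 \<le> t then gamma p q \<theta> i else 0)"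

definition eta :: "nat \<Rightarrow> nat \<Rightarrow> (nat \<Rightarrow> real) \<Rightarrow> nat \<Rightarrow> real" where
  "eta p q \<theta>0 i = fps_nth (frac_fps (- \<theta>0 (p + q + 1)) * inverse (a_fps p \<theta>0) * b_fps p q \<theta>0) i"

definition dlambda :: "nat \<Rightarrow> nat \<Rightarrow> nat \<Rightarrow> nat \<Rightarrow> (nat \<Rightarrow> real) \<Rightarrow> (nat \<Rightarrow> real) \<Rightarrow> nat \<Rightarrow> real" where
  "dlambda p q t k \<theta> \<theta>0 n =
     (\<Sum>j\<le>n. deriv (\<lambda>x. gamma_t p q t (\<theta>(k := x)) j) (\<theta> k) * eta p q \<theta>0 (n - j))"

definition lr_norm :: "ereal \<Rightarrow> (nat \<Rightarrow> real) \<Rightarrow> ereal" where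
  "lr_norm r x =
     (if r = \<infinity> then (SUP n. ereal \<bar>x n\<bar>)
      else if summable (\<lambda>n. \<bar>x n\<bar> powr real_of_ereal r)
      then ereal ((\<Sum>n. \<bar>x n\<bar> powr real_of_ereal r) powr (1 / real_of_ereal r))
      else \<infinity>)"

end

theory Submission
  imports Defs "HOL-Complex_Analysis.Complex_Analysis" "HOL-Real_Asymp.Real_Asymp"
begin

unbundle no vec_syntax



lemma powr_step:
  fixes a :: real and n :: nat
  assumes "0 \<le> a" "a < 1"
  shows "(1 - a) * (real n + 2) powr (-a) \<le> (real n + 2) powr (1 - a) - (real n + 1) powr (1 - a)"
proof -
  have "\<exists>z>real n + 1. z < real n + 2 \<and>
         (real n + 2) powr (1 - a) - (real n + 1) powr (1 - a) = (real n + 2 - (real n + 1)) * ((1 - a) * z powr (1 - a - 1))"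
    by (intro MVT2) (auto intro!: derivative_eq_intros)
  then obtain z where z: "z > real n + 1" "z < real n + 2"
    "(real n + 2) powr (1 - a) - (real n + 1) powr (1 - a) = (1 - a) * z powr (- a)" by auto
  have "(real n + 2) powr (-a) \<le> z powr (-a)"
    by (rule powr_mono2') (use z assms in auto)
  thus ?thesis using z assms by (simp add: mult_left_mono)
qed

lemma sum_powr_bound:
  fixes a :: real
  assumes "0 \<le> a" "a < 1"
  shows "(\<Sum>m\<le>n. (real m + 1) powr (-a)) \<le> (real n + 1) powr (1 - a) / (1 - a)"
proof (induction n)
  case 0
  then show ?case using assms by (simp add: field_simps)
next
  case (Suc n)
  have "(\<Sum>m\<le>Suc n. (real m + 1) powr (-a)) = (\<Sum>m\<le>n. (real m + 1) powr (-a)) + (real n + 2) powr (-a)"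
    by (simp add: add.commute)
  also have "\<dots> \<le> (real n + 1) powr (1 - a) / (1 - a) + (real n + 2) powr (-a)"
    using Suc by simp
  also have "\<dots> \<le> (real n + 2) powr (1 - a) / (1 - a)"
  proof -
    have "(real n + 1) powr (1 - a) + (1-a) * (real n + 2) powr (-a) \<le> (real n + 2) powr (1 - a)"
      using powr_step[OF assms, of n] by linarith
    hence "((real n + 1) powr (1 - a) + (1-a) * (real n + 2) powr (-a)) / (1-a) \<le> (real n + 2) powr (1 - a) / (1-a)"
      using assms by (intro divide_right_mono) auto
    thus ?thesis using assms by (simp add: add_divide_distrib)
  qed
  finally show ?case by (simp add: add.commute)
qed

lemma sum_sq_bound: "(\<Sum>m\<le>n. (real m + 1) powr (-2)) \<le> 2"
proof -
  have "(\<Sum>m\<le>n. (real m + 1) powr (-2)) \<le> 2 - 1 / (real n + 1)" for n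
  proof (induction n)
    case 0 then show ?case by simp
  next
    case (Suc n)
    have e: "(real n + 2) powr (-2) = 1 / (real n + 2)^2"
      by (simp add: powr_minus powr_realpow divide_inverse)
    have "(\<Sum>m\<le>Suc n. (real m + 1) powr (-2)) = (\<Sum>m\<le>n. (real m + 1) powr (-2)) + (real n + 2) powr (-2)"
      by (simp add: add.commute)
    also have "\<dots> \<le> 2 - 1 / (real n + 1) + 1 / (real n + 2)^2" using Suc e by simp
    also have "\<dots> \<le> 2 - 1 / (real n + 2)"
    proof -
      have eq: "1 / (real n + 1) - 1 / (real n + 2) = 1 / ((real n + 1) * (real n + 2))"
        by (simp add: field_simps)
      have le: "1 / (real n + 2)^2 \<le> 1 / ((real n + 1) * (real n + 2))"
      proof (rule divide_left_mono)
        show "(real n + 1) * (real n + 2) \<le> (real n + 2)^2" by (simp add: power2_eq_square)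
        show "0 < (real n + 2)^2 * ((real n + 1) * (real n + 2))" by simp
      qed simp
      from eq le show ?thesis by linarith
    qed
    finally show ?case by (simp add: add.commute)
  qed
  from this[of n] have "(\<Sum>m\<le>n. (real m + 1) powr (-2)) \<le> 2 - 1 / (real n + 1)" .
  moreover have "0 \<le> 1 / (real n + 1)" by simp
  ultimately show ?thesis by linarith
qed

lemma split_half:
  fixes a :: real and m n :: nat
  assumes "0 \<le> a" "m \<le> n" "real n + 1 \<le> 2 * (real m + 1)"
  shows "(real m + 1) powr (-a) \<le> 2 powr a * (real n + 1) powr (-a)"
proof -
  have "(real m + 1) powr (-a) \<le> ((real n + 1) / 2) powr (-a)"
    by (rule powr_mono2') (use assms in auto)
  also have "\<dots> = (real n + 1) powr (-a) / 2 powr (-a)"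
    by (rule powr_divide)
  also have "2 powr (-a) = inverse (2 powr a)" by (rule powr_minus)
  also have "(real n + 1) powr (-a) / inverse (2 powr a) = 2 powr a * (real n + 1) powr (-a)"
    by (simp add: divide_inverse mult.commute)
  finally show ?thesis .
qed

lemma sum_reflect_atMost: "(\<Sum>m\<le>n. f (n - m)) = (\<Sum>m\<le>n. (f (m::nat)::real))"
  by (rule sum.reindex_bij_witness[where i="\<lambda>m. n - m" and j="\<lambda>m. n - m"]) auto

lemma conv_bound:
  fixes a b :: real
  assumes a: "0 < a" "a < 1" and b: "0 < b" "b < 1"
  shows "(\<Sum>m\<le>n. (real m + 1) powr (-a) * (real (n - m) + 1) powr (-b))
          \<le> (2 powr a / (1 - b) + 2 powr b / (1 - a)) * (real n + 1) powr (- (a + b - 1))"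
proof -
  have pt: "(real m + 1) powr (-a) * (real (n - m) + 1) powr (-b)
     \<le> 2 powr a * (real n + 1) powr (-a) * (real (n - m) + 1) powr (-b)
       + 2 powr b * (real n + 1) powr (-b) * (real m + 1) powr (-a)" if "m \<le> n" for m
  proof (cases "real n + 1 \<le> 2 * (real m + 1)")
    case True
    have "(real m + 1) powr (-a) * (real (n - m) + 1) powr (-b) \<le> 2 powr a * (real n + 1) powr (-a) * (real (n - m) + 1) powr (-b)"
      using split_half[OF _ that True, of a] a by (intro mult_right_mono) auto
    moreover have "0 \<le> 2 powr b * (real n + 1) powr (-b) * (real m + 1) powr (-a)" by simp
    ultimately show ?thesis by linarith
  next
    case False
    have "real n + 1 \<le> 2 * (real (n - m) + 1)" using False that by (simp add: of_nat_diff)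
    from split_half[OF _ _ this, of b] b
    have "(real (n - m) + 1) powr (-b) \<le> 2 powr b * (real n + 1) powr (-b)" by simp
    hence "(real m + 1) powr (-a) * (real (n - m) + 1) powr (-b) \<le> 2 powr b * (real n + 1) powr (-b) * (real m + 1) powr (-a)"
      by (simp add: mult_left_mono mult.commute)
    moreover have "0 \<le> 2 powr a * (real n + 1) powr (-a) * (real (n - m) + 1) powr (-b)" by simp
    ultimately show ?thesis by linarith
  qed
  have s0: "(\<Sum>m\<le>n. (real m + 1) powr (-a) * (real (n - m) + 1) powr (-b))
     \<le> (\<Sum>m\<le>n. 2 powr a * (real n + 1) powr (-a) * (real (n - m) + 1) powr (-b)
       + 2 powr b * (real n + 1) powr (-b) * (real m + 1) powr (-a))"
    by (rule sum_mono) (rule pt, simp)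
  have r: "(\<Sum>m\<le>n. (real (n - m) + 1) powr (-b)) = (\<Sum>m\<le>n. (real m + 1) powr (-b))"
    by (rule sum_reflect_atMost)
  have s1: "(\<Sum>m\<le>n. 2 powr a * (real n + 1) powr (-a) * (real (n - m) + 1) powr (-b)
       + 2 powr b * (real n + 1) powr (-b) * (real m + 1) powr (-a)) = 2 powr a * (real n + 1) powr (-a) * (\<Sum>m\<le>n. (real (n - m) + 1) powr (-b))
       + 2 powr b * (real n + 1) powr (-b) * (\<Sum>m\<le>n. (real m + 1) powr (-a))"
    by (simp add: sum.distrib sum_distrib_left)
  have s2: "2 powr a * (real n + 1) powr (-a) * (\<Sum>m\<le>n. (real m + 1) powr (-b))
       + 2 powr b * (real n + 1) powr (-b) * (\<Sum>m\<le>n. (real m + 1) powr (-a))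
     \<le> 2 powr a * (real n + 1) powr (-a) * ((real n + 1) powr (1 - b) / (1 - b))
       + 2 powr b * (real n + 1) powr (-b) * ((real n + 1) powr (1 - a) / (1 - a))"
    using a b by (intro add_mono mult_left_mono sum_powr_bound) auto
  have gmul: "\<And>A x y c::real. A * x * (y / c) = (A / c) * (x * y)"
    by (simp add: divide_inverse mult_ac)
  have e1: "(real n + 1) powr (-a) * (real n + 1) powr (1 - b) = (real n + 1) powr (- (a + b - 1))"
  proof -
    have "-a + (1 - b) = - (a + b - 1)" by simp
    then show ?thesis by (metis powr_add)
  qed
  have e2: "(real n + 1) powr (-b) * (real n + 1) powr (1 - a) = (real n + 1) powr (- (a + b - 1))"
  proof -
    have "-b + (1 - a) = - (a + b - 1)" by simp
    then show ?thesis by (metis powr_add)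
  qed
  have s3: "2 powr a * (real n + 1) powr (-a) * ((real n + 1) powr (1 - b) / (1 - b))
       + 2 powr b * (real n + 1) powr (-b) * ((real n + 1) powr (1 - a) / (1 - a))
       = (2 powr a / (1 - b) + 2 powr b / (1 - a)) * (real n + 1) powr (- (a + b - 1))"
    unfolding gmul e1 e2 by (rule distrib_right[symmetric])
  show ?thesis using s0 s1[unfolded r] s2 s3 by linarith
qed





definition dec :: "real \<Rightarrow> real fps \<Rightarrow> bool" where
  "dec a f \<longleftrightarrow> (\<exists>C. \<forall>n. \<bar>f $ n\<bar> \<le> C * (real n + 1) powr (-a))"

lemma decE:
  assumes "dec a f"
  obtains C where "C \<ge> 0" "\<And>n. \<bar>f $ n\<bar> \<le> C * (real n + 1) powr (-a)"
proof -
  from assms obtain C where C: "\<And>n. \<bar>f $ n\<bar> \<le> C * (real n + 1) powr (-a)"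
    unfolding dec_def by blast
  have "\<bar>f $ 0\<bar> \<le> C" using C[of 0] by simp
  hence "0 \<le> C" by (meson abs_ge_zero order_trans)
  thus ?thesis using C that by blast
qed

lemma dec_mono:
  assumes "dec a f" "b \<le> a"
  shows "dec b f"
proof -
  obtain C where C: "C \<ge> 0" "\<And>n. \<bar>f $ n\<bar> \<le> C * (real n + 1) powr (-a)" using assms decE by blast
  have "\<bar>f $ n\<bar> \<le> C * (real n + 1) powr (-b)" for n
  proof -
    have "(real n + 1) powr (-a) \<le> (real n + 1) powr (-b)"
      by (rule powr_mono) (use assms in auto)
    thus ?thesis using C(2)[of n] C(1) by (meson mult_left_mono order_trans)
  qed
  thus ?thesis unfolding dec_def by blast
qed

lemma dec_add: "dec a f \<Longrightarrow> dec a g \<Longrightarrow> dec a (f + g)"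
proof -
  assume "dec a f" "dec a g"
  then obtain C D where C: "\<And>n. \<bar>f $ n\<bar> \<le> C * (real n + 1) powr (-a)"
    and D: "\<And>n. \<bar>g $ n\<bar> \<le> D * (real n + 1) powr (-a)" unfolding dec_def by blast
  have "\<bar>(f + g) $ n\<bar> \<le> (C + D) * (real n + 1) powr (-a)" for n
    using C[of n] D[of n] by (simp add: distrib_right abs_triangle_ineq order_trans)
  thus ?thesis unfolding dec_def by blast
qed

lemma dec_uminus: "dec a f \<Longrightarrow> dec a (- f)"
  unfolding dec_def by simp

lemma dec_zero: "dec a 0"
  unfolding dec_def by (intro exI[of _ 0]) simp

lemma dec_fin:
  fixes f :: "real fps"
  assumes "\<And>n. n > N \<Longrightarrow> f $ n = 0" "0 \<le> a"
  shows "dec a f"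
proof -
  define S where "S = (\<Sum>i\<le>N. \<bar>f $ i\<bar>)"
  have "\<bar>f $ n\<bar> \<le> (S * (real N + 1) powr a) * (real n + 1) powr (-a)" for n
  proof (cases "n \<le> N")
    case True
    have "\<bar>f $ n\<bar> \<le> S" unfolding S_def
      using True by (intro member_le_sum) auto
    moreover have X: "1 \<le> (real N + 1) powr a * (real n + 1) powr (-a)"
    proof -
      have "(real N + 1) powr (-a) \<le> (real n + 1) powr (-a)"
        by (rule powr_mono2') (use True assms in auto)
      hence "(real N + 1) powr a * (real N + 1) powr (-a) \<le> (real N + 1) powr a * (real n + 1) powr (-a)"
        by (intro mult_left_mono) auto
      moreover have "(real N + 1) powr a * (real N + 1) powr (-a) = 1" by (simp add: powr_minus)
      ultimately show ?thesis by linarith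
    qed
    moreover have S0: "0 \<le> S" unfolding S_def by (intro sum_nonneg) auto
    ultimately have "\<bar>f $ n\<bar> \<le> S * ((real N + 1) powr a * (real n + 1) powr (-a))"
      using mult_left_mono[OF X S0] by linarith
    thus ?thesis by (simp add: mult.assoc)
  next
    case False
    thus ?thesis using assms(1)[of n] S_def
      by (simp add: sum_nonneg)
  qed
  thus ?thesis unfolding dec_def by blast
qed

lemma dec_mult_gen:
  assumes "dec a f" "dec b g"
    and K: "\<And>n. (\<Sum>m\<le>n. (real m + 1) powr (-a) * (real (n - m) + 1) powr (-b)) \<le> K * (real n + 1) powr (-c)"
  shows "dec c (f * g)"
proof -
  obtain C where C: "C \<ge> 0" "\<And>n. \<bar>f $ n\<bar> \<le> C * (real n + 1) powr (-a)" using assms decE by blast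
  obtain D where D: "D \<ge> 0" "\<And>n. \<bar>g $ n\<bar> \<le> D * (real n + 1) powr (-b)" using assms decE by blast
  have "\<bar>(f * g) $ n\<bar> \<le> (C * D * K) * (real n + 1) powr (-c)" for n
  proof -
    have "\<bar>(f * g) $ n\<bar> = \<bar>\<Sum>m\<le>n. f $ m * g $ (n - m)\<bar>"
      by (simp add: fps_mult_nth atLeast0AtMost)
    also have "\<dots> \<le> (\<Sum>m\<le>n. \<bar>f $ m\<bar> * \<bar>g $ (n - m)\<bar>)"
      by (rule order_trans[OF sum_abs]) (simp add: abs_mult)
    also have "\<dots> \<le> (\<Sum>m\<le>n. (C * (real m + 1) powr (-a)) * (D * (real (n - m) + 1) powr (-b)))"
      by (intro sum_mono mult_mono C D) (auto intro!: mult_nonneg_nonneg C D)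
    also have "\<dots> = C * D * (\<Sum>m\<le>n. (real m + 1) powr (-a) * (real (n - m) + 1) powr (-b))"
      by (simp add: sum_distrib_left mult_ac)
    also have "\<dots> \<le> C * D * (K * (real n + 1) powr (-c))"
      using C D K by (intro mult_left_mono) auto
    finally show ?thesis by (simp add: mult_ac)
  qed
  thus ?thesis unfolding dec_def by blast
qed

lemma dec_mult:
  assumes "dec a f" "dec b g" "0 < a" "a < 1" "0 < b" "b < 1"
  shows "dec (a + b - 1) (f * g)"
  using assms conv_bound by (intro dec_mult_gen) auto

lemma conv_fast:
  fixes a :: real
  assumes "0 \<le> a" "a \<le> 1"
  shows "(\<Sum>m\<le>n. (real m + 1) powr (-2) * (real (n - m) + 1) powr (-a))
          \<le> (2 * 2 powr a + 4) * (real n + 1) powr (-a)"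
proof -
  have pt: "(real m + 1) powr (-2) * (real (n - m) + 1) powr (-a)
     \<le> 2 powr a * (real n + 1) powr (-a) * (real m + 1) powr (-2) + 4 * (real n + 1) powr (-2)"
    if "m \<le> n" for m
  proof (cases "real n + 1 \<le> 2 * (real (n - m) + 1)")
    case True
    from split_half[OF _ _ True, of a] assms
    have "(real (n - m) + 1) powr (-a) \<le> 2 powr a * (real n + 1) powr (-a)" by simp
    hence A: "(real m + 1) powr (-2) * (real (n - m) + 1) powr (-a) \<le> (real m + 1) powr (-2) * (2 powr a * (real n + 1) powr (-a))"
      by (rule mult_left_mono) simp
    have B: "(real m + 1) powr (-2) * (2 powr a * (real n + 1) powr (-a)) = 2 powr a * (real n + 1) powr (-a) * (real m + 1) powr (-2)"
      by (simp add: mult_ac)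
    have C: "0 \<le> 4 * (real n + 1) powr (-2)" by simp
    show ?thesis using A B C by linarith
  next
    case False
    hence "real n + 1 \<le> 2 * (real m + 1)" using that by (simp add: of_nat_diff)
    from split_half[OF _ that this, of 2]
    have X: "(real m + 1) powr (-2) \<le> 4 * (real n + 1) powr (-2)" by simp
    have Y: "(real (n - m) + 1) powr (-a) \<le> 1"
      using powr_mono2'[of "-a" 1 "real (n - m) + 1"] assms by simp
    have "(real m + 1) powr (-2) * (real (n - m) + 1) powr (-a) \<le> (4 * (real n + 1) powr (-2)) * 1"
      by (rule mult_mono[OF X Y]) auto
    moreover have "0 \<le> 2 powr a * (real n + 1) powr (-a) * (real m + 1) powr (-2)" by simp
    ultimately show ?thesis by linarith
  qed
  have s0: "(\<Sum>m\<le>n. (real m + 1) powr (-2) * (real (n - m) + 1) powr (-a))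
     \<le> (\<Sum>m\<le>n. 2 powr a * (real n + 1) powr (-a) * (real m + 1) powr (-2) + 4 * (real n + 1) powr (-2))"
    by (rule sum_mono) (rule pt, simp)
  have s1: "(\<Sum>m\<le>n. 2 powr a * (real n + 1) powr (-a) * (real m + 1) powr (-2) + 4 * (real n + 1) powr (-2))
      = 2 powr a * (real n + 1) powr (-a) * (\<Sum>m\<le>n. (real m + 1) powr (-2))
        + 4 * (real n + 1) * (real n + 1) powr (-2)"
    by (simp add: sum.distrib sum_distrib_left)
  have s2: "2 powr a * (real n + 1) powr (-a) * (\<Sum>m\<le>n. (real m + 1) powr (-2)) \<le> 2 powr a * (real n + 1) powr (-a) * 2"
    by (rule mult_left_mono[OF sum_sq_bound]) simp
  have e: "(real n + 1) powr 1 * (real n + 1) powr (-2) = (real n + 1) powr (-1)"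
  proof -
    have "1 + (-2) = (-1::real)" by simp
    thus ?thesis by (metis powr_add)
  qed
  have s3: "(real n + 1) * (real n + 1) powr (-2) \<le> (real n + 1) powr (-a)"
  proof -
    have "(real n + 1) * (real n + 1) powr (-2) = (real n + 1) powr (-1)" using e by simp
    also have "\<dots> \<le> (real n + 1) powr (-a)"
      by (rule powr_mono) (use assms in auto)
    finally show ?thesis .
  qed
  have "4 * (real n + 1) * (real n + 1) powr (-2) = 4 * ((real n + 1) * (real n + 1) powr (-2))"
    by (rule mult.assoc)
  hence "4 * (real n + 1) * (real n + 1) powr (-2) \<le> 4 * (real n + 1) powr (-a)"
    using s3 by linarith
  hence "(\<Sum>m\<le>n. (real m + 1) powr (-2) * (real (n - m) + 1) powr (-a))
     \<le> 2 powr a * (real n + 1) powr (-a) * 2 + 4 * (real n + 1) powr (-a)"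
    using s0 s1 s2 by linarith
  thus ?thesis by (simp add: algebra_simps)
qed

lemma dec_mult_fast:
  assumes "dec 2 f" "dec a g" "0 \<le> a" "a \<le> 1"
  shows "dec a (f * g)"
  using assms conv_fast by (intro dec_mult_gen[where K = "2 * 2 powr a + 4"]) auto

lemma dec_mult_fast':
  assumes "dec a f" "dec 2 g" "0 \<le> a" "a \<le> 1"
  shows "dec a (f * g)"
  using dec_mult_fast[OF assms(2,1,3,4)] by (simp add: mult.commute)

lemma conv_ff:
  "(\<Sum>m\<le>n. (real m + 1) powr (-2) * (real (n - m) + 1) powr (-2)) \<le> 16 * (real n + 1) powr (-2)"
proof -
  have pt: "(real m + 1) powr (-2) * (real (n - m) + 1) powr (-2)
     \<le> 4 * (real n + 1) powr (-2) * ((real m + 1) powr (-2) + (real (n - m) + 1) powr (-2))"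
    if "m \<le> n" for m
  proof -
    define X where "X = (real m + 1) powr (-2)"
    define Y where "Y = (real (n - m) + 1) powr (-2)"
    define W where "W = 4 * (real n + 1) powr (-2)"
    have X0: "0 \<le> X" and Y0: "0 \<le> Y" and W0: "0 \<le> W" by (simp_all add: X_def Y_def W_def)
    have D: "W * (X + Y) = W * X + W * Y" by (rule distrib_left)
    have "X * Y \<le> W * X + W * Y"
    proof (cases "real n + 1 \<le> 2 * (real (n - m) + 1)")
      case True
      from split_half[OF _ _ True, of 2] have "Y \<le> W" by (simp add: Y_def W_def)
      hence "X * Y \<le> X * W" using X0 by (rule mult_left_mono)
      moreover have "X * W = W * X" by (rule mult.commute)
      moreover have "0 \<le> W * Y" using W0 Y0 by simp
      ultimately show ?thesis by linarith
    next
      case False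
      hence "real n + 1 \<le> 2 * (real m + 1)" using that by (simp add: of_nat_diff)
      from split_half[OF _ that this, of 2] have "X \<le> W" by (simp add: X_def W_def)
      hence "X * Y \<le> W * Y" using Y0 by (rule mult_right_mono)
      moreover have "0 \<le> W * X" using W0 X0 by simp
      ultimately show ?thesis by linarith
    qed
    hence "X * Y \<le> W * (X + Y)" using D by linarith
    thus ?thesis by (simp only: X_def Y_def W_def)
  qed
  have "(\<Sum>m\<le>n. (real m + 1) powr (-2) * (real (n - m) + 1) powr (-2))
     \<le> (\<Sum>m\<le>n. 4 * (real n + 1) powr (-2) * ((real m + 1) powr (-2) + (real (n - m) + 1) powr (-2)))"
    by (intro sum_mono pt) auto
  also have "\<dots> = 4 * (real n + 1) powr (-2) * ((\<Sum>m\<le>n. (real m + 1) powr (-2)) + (\<Sum>m\<le>n. (real (n - m) + 1) powr (-2)))"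
    by (simp only: sum.distrib sum_distrib_left distrib_left)
  also have "\<dots> = 4 * (real n + 1) powr (-2) * ((\<Sum>m\<le>n. (real m + 1) powr (-2)) + (\<Sum>m\<le>n. (real m + 1) powr (-2)))"
    using sum_reflect_atMost[of "\<lambda>m. (real m + 1) powr (-2)" n] by (simp only:)
  also have "\<dots>
       \<le> 4 * (real n + 1) powr (-2) * (2 + 2)"
    by (intro mult_left_mono add_mono sum_sq_bound) auto
  finally show ?thesis by simp
qed

lemma dec_mult_ff:
  assumes "dec 2 f" "dec 2 g"
  shows "dec 2 (f * g)"
  using assms conv_ff by (intro dec_mult_gen[where K = 16]) auto





definition fd :: "(real \<Rightarrow> real fps) \<Rightarrow> real fps \<Rightarrow> real \<Rightarrow> bool" where
  "fd f D x0 \<longleftrightarrow> (\<forall>n. ((\<lambda>x. f x $ n) has_real_derivative D $ n) (at x0))"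

lemma fd_const: "fd (\<lambda>x. F) 0 x0"
  unfolding fd_def by simp

lemma fd_mult:
  assumes "fd f F x0" "fd g G x0"
  shows "fd (\<lambda>x. f x * g x) (F * g x0 + f x0 * G) x0"
  unfolding fd_def
proof
  fix n
  have "((\<lambda>x. \<Sum>i=0..n. f x $ i * g x $ (n - i)) has_real_derivative
          (\<Sum>i=0..n. F $ i * g x0 $ (n - i) + f x0 $ i * G $ (n - i))) (at x0)"
    using assms unfolding fd_def
    by (intro DERIV_sum) (auto intro!: derivative_eq_intros)
  thus "((\<lambda>x. (f x * g x) $ n) has_real_derivative (F * g x0 + f x0 * G) $ n) (at x0)"
    by (simp add: fps_mult_nth sum.distrib)
qed

lemma inv_rec:
  fixes g :: "real fps"
  assumes "g $ 0 = 1" "m > 0"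
  shows "inverse g $ m = - (\<Sum>i=1..m. g $ i * inverse g $ (m - i))"
proof -
  have "(g * inverse g) $ m = 0" using assms by (simp add: inverse_mult_eq_1')
  hence "(\<Sum>i=0..m. g $ i * inverse g $ (m - i)) = 0" by (simp add: fps_mult_nth)
  hence "g $ 0 * inverse g $ m + (\<Sum>i=Suc 0..m. g $ i * inverse g $ (m - i)) = 0"
    by (subst (asm) sum.atLeast_Suc_atMost) auto
  thus ?thesis using assms by simp
qed

lemma fd_inverse:
  assumes one: "\<And>x. f x $ 0 = 1" and fdf: "fd f F x0"
  shows "fd (\<lambda>x. inverse (f x)) (- (inverse (f x0) * inverse (f x0) * F)) x0"
proof -
  define I where "I = inverse (f x0)"
  define D where "D = - (I * I * F)"
  have F0: "F $ 0 = 0"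
  proof -
    have "((\<lambda>x. f x $ 0) has_real_derivative F $ 0) (at x0)" using fdf unfolding fd_def by blast
    hence "((\<lambda>x. 1) has_real_derivative F $ 0) (at x0)" using one by simp
    thus ?thesis using DERIV_const DERIV_unique by blast
  qed
  have fI: "f x0 * I = 1" unfolding I_def using one by (simp add: inverse_mult_eq_1')
  have iden: "f x0 * D + F * I = 0"
  proof -
    have "f x0 * D = - ((f x0 * I) * I * F)" by (simp add: D_def mult_ac)
    thus ?thesis using fI by (simp add: mult_ac)
  qed
  have "((\<lambda>x. inverse (f x) $ n) has_real_derivative D $ n) (at x0)" for n
  proof (induction n rule: less_induct)
    case (less n)
    show ?case
    proof (cases "n = 0")
      case True
      have "(\<lambda>x. inverse (f x) $ n) = (\<lambda>x. 1)" using True one by simp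
      moreover have "D $ n = 0" using True F0 by (simp add: D_def)
      ultimately show ?thesis by simp
    next
      case False
      have eq: "(\<lambda>x. inverse (f x) $ n) = (\<lambda>x. - (\<Sum>i=1..n. f x $ i * inverse (f x) $ (n - i)))"
        using inv_rec[OF one] False by auto
      have termd: "((\<lambda>x. f x $ i * inverse (f x) $ (n - i)) has_real_derivative
          F $ i * I $ (n - i) + f x0 $ i * D $ (n - i)) (at x0)" if i: "i \<in> {1..n}" for i
      proof -
        have a: "((\<lambda>x. f x $ i) has_real_derivative F $ i) (at x0)" using fdf unfolding fd_def by blast
        have b: "((\<lambda>x. inverse (f x) $ (n - i)) has_real_derivative D $ (n - i)) (at x0)"
          using i False by (intro less) auto
        show ?thesis
          by (rule DERIV_cong[OF DERIV_mult[OF a b]]) (simp add: I_def mult.commute)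
      qed
      have der: "((\<lambda>x. - (\<Sum>i=1..n. f x $ i * inverse (f x) $ (n - i))) has_real_derivative
          - (\<Sum>i=1..n. F $ i * I $ (n - i) + f x0 $ i * D $ (n - i))) (at x0)"
        by (intro DERIV_minus DERIV_sum termd)
      have "(f x0 * D + F * I) $ n = 0" using iden by simp
      hence "(\<Sum>i=0..n. f x0 $ i * D $ (n - i)) + (\<Sum>i=0..n. F $ i * I $ (n - i)) = 0"
        by (simp add: fps_mult_nth)
      hence "f x0 $ 0 * D $ n + (\<Sum>i=Suc 0..n. f x0 $ i * D $ (n - i))
             + (F $ 0 * I $ n + (\<Sum>i=Suc 0..n. F $ i * I $ (n - i))) = 0"
        by (simp add: sum.atLeast_Suc_atMost)
      hence "D $ n = - (\<Sum>i=1..n. F $ i * I $ (n - i) + f x0 $ i * D $ (n - i))"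
        using one F0 by (simp add: sum.distrib)
      thus ?thesis using eq der by simp
    qed
  qed
  thus ?thesis unfolding fd_def D_def I_def by blast
qed

lemma fd_add:
  assumes "fd f F x0" "fd g G x0"
  shows "fd (\<lambda>x. f x + g x) (F + G) x0"
  using assms unfolding fd_def by (auto intro!: derivative_eq_intros)





definition cfr :: "nat \<Rightarrow> real \<Rightarrow> real" where
  "cfr n x = (\<Prod>i<n. (real i - x) / (real i + 1))"

definition cfr' :: "nat \<Rightarrow> real \<Rightarrow> real" where
  "cfr' n x = (\<Sum>l<n. (-1 / (real l + 1)) * (\<Prod>i\<in>{..<n}-{l}. (real i - x) / (real i + 1)))"

definition Pn :: "nat \<Rightarrow> real \<Rightarrow> real" where
  "Pn n x = (\<Prod>i\<in>{1..<n}. (real i - x) / (real i + 1))"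

lemma frac_nth: "frac_fps x $ n = cfr n x"
proof -
  have "(-1)^n * (x gchoose n) = cfr n x"
  proof (induction n)
    case 0 then show ?case by (simp add: cfr_def)
  next
    case (Suc n)
    have "(-1)^Suc n * (x gchoose Suc n) = ((-1)^n * (x gchoose n)) * ((real n - x) / (real n + 1))"
      by (simp add: gbinomial_Suc_rec field_simps)
    also have "\<dots> = cfr (Suc n) x" using Suc by (simp add: cfr_def)
    finally show ?case .
  qed
  thus ?thesis by (simp add: frac_fps_def)
qed

lemma cfr_deriv: "((\<lambda>x. cfr n x) has_real_derivative cfr' n x) (at x)"
proof -
  have "((\<lambda>u. \<Prod>i\<in>{..<n}. (real i - u) / (real i + 1)) has_real_derivative
     (\<Sum>l\<in>{..<n}. (-1 / (real l + 1)) * (\<Prod>i\<in>{..<n}-{l}. (real i - x) / (real i + 1)))) (at x)"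
  proof (rule has_field_derivative_prod)
    fix i assume "i \<in> {..<n}"
    have "((\<lambda>u. (real i - u) / (real i + 1)) has_real_derivative (0 - 1) / (real i + 1)) (at x)"
      by (intro DERIV_cdivide DERIV_diff DERIV_const DERIV_ident)
    thus "((\<lambda>u. (real i - u) / (real i + 1)) has_real_derivative -1 / (real i + 1)) (at x)" by simp
  qed
  thus ?thesis unfolding cfr_def cfr'_def by simp
qed

lemma lessThan_insert0:
  fixes n :: nat
  assumes "n > 0" shows "{..<n} = insert 0 {1..<n}"
proof (intro set_eqI iffI)
  fix y assume "y \<in> {..<n}" thus "y \<in> insert 0 {1..<n}" by (cases y) auto
next
  fix y assume "y \<in> insert 0 {1..<n}" thus "y \<in> {..<n}" using assms by auto
qed

lemma Pn_bound:
  assumes "-1 \<le> x" "x \<le> 1"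
  shows "0 \<le> Pn n x" "Pn n x \<le> exp (1 + x) * (real n + 1) powr (-(1 + x))"
proof -
  have fac: "0 \<le> (real i - x) / (real i + 1) \<and> (real i - x) / (real i + 1) \<le> exp (-(1 + x) / (real i + 1))"
    if "i \<in> {1..<n}" for i
  proof
    show "0 \<le> (real i - x) / (real i + 1)" using that assms by auto
    have "(real i - x) / (real i + 1) = 1 + (-(1 + x) / (real i + 1))" by (simp add: field_simps)
    also have "\<dots> \<le> exp (-(1 + x) / (real i + 1))" by (rule exp_ge_add_one_self)
    finally show "(real i - x) / (real i + 1) \<le> exp (-(1 + x) / (real i + 1))" .
  qed
  show "0 \<le> Pn n x" unfolding Pn_def using fac by (intro prod_nonneg) blast
  define S where "S = (\<Sum>i\<in>{1..<n}. 1 / (real i + 1))"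
  have "Pn n x \<le> (\<Prod>i\<in>{1..<n}. exp (-(1 + x) / (real i + 1)))"
    unfolding Pn_def using fac by (intro prod_mono) blast
  also have "\<dots> = exp (\<Sum>i\<in>{1..<n}. -(1 + x) / (real i + 1))" by (simp add: exp_sum)
  also have "(\<Sum>i\<in>{1..<n}. -(1 + x) / (real i + 1)) = -(1 + x) * S"
    by (simp add: S_def sum_distrib_left)
  also have "S \<ge> ln (real n + 1) - 1"
  proof -
    have "harm n = (\<Sum>k<n. 1 / (real k + 1))" by (simp add: harm_altdef field_simps)
    also have "\<dots> \<le> (\<Sum>k\<in>insert 0 {1..<n}. 1 / (real k + 1))"
      by (intro sum_mono2) auto
    also have "\<dots> = 1 + S" by (simp add: S_def)
    finally show ?thesis using ln_le_harm[of n] by linarith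
  qed
  hence "exp (-(1 + x) * S) \<le> exp (-(1 + x) * (ln (real n + 1) - 1))"
    using assms by (intro exp_mono mult_left_mono_neg) auto
  also have "\<dots> = exp (1 + x) * exp (-(1 + x) * ln (real n + 1))"
    by (simp add: algebra_simps exp_add[symmetric])
  also have "exp (-(1 + x) * ln (real n + 1)) = (real n + 1) powr (-(1 + x))"
    by (simp add: powr_def)
  finally show "Pn n x \<le> exp (1 + x) * (real n + 1) powr (-(1 + x))" .
qed

lemma cfr_bound:
  assumes "-1/2 \<le> x" "x \<le> 1/2"
  shows "\<bar>cfr n x\<bar> \<le> exp (1 + x) * (real n + 1) powr (-(1 + x))"
proof (cases "n = 0")
  case True
  have "1 \<le> exp (1 + x)" using assms by simp
  thus ?thesis using True by (simp add: cfr_def)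
next
  case False
  have "cfr n x = (- x) * Pn n x"
    using False unfolding cfr_def Pn_def by (simp add: lessThan_insert0)
  hence "\<bar>cfr n x\<bar> = \<bar>x\<bar> * Pn n x" using Pn_bound(1)[of x n] assms by (simp add: abs_mult)
  also have "\<dots> \<le> Pn n x" using Pn_bound(1)[of x n] assms by (intro mult_left_le_one_le) auto
  also have "\<dots> \<le> exp (1 + x) * (real n + 1) powr (-(1 + x))" using Pn_bound(2)[of x n] assms by simp
  finally show ?thesis .
qed

lemma cfr'_bound:
  assumes "-1/2 \<le> x" "x \<le> 1/2"
  shows "\<bar>cfr' n x\<bar> \<le> 2 * harm n * Pn n x"
proof -
  have P0: "0 \<le> Pn n x" using Pn_bound(1)[of x n] assms by simp
  have trm: "\<bar>(-1 / (real l + 1)) * (\<Prod>i\<in>{..<n}-{l}. (real i - x) / (real i + 1))\<bar>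
      \<le> 2 * Pn n x * (1 / (real l + 1))" if l: "l < n" for l
  proof (cases "l = 0")
    case True
    have "{..<n} - {l} = {1..<n}" using True by auto
    hence "\<bar>(-1 / (real l + 1)) * (\<Prod>i\<in>{..<n}-{l}. (real i - x) / (real i + 1))\<bar> = Pn n x"
      using True P0 by (simp add: Pn_def)
    thus ?thesis using True P0 by simp
  next
    case False
    define Q where "Q = (\<Prod>i\<in>{1..<n}-{l}. (real i - x) / (real i + 1))"
    have Q0: "0 \<le> Q" unfolding Q_def using assms by (intro prod_nonneg) auto
    have "{..<n} - {l} = insert 0 ({1..<n}-{l})" using False l by auto
    hence e1: "(\<Prod>i\<in>{..<n}-{l}. (real i - x) / (real i + 1)) = (- x) * Q"
      by (simp add: Q_def)
    have PQ: "Pn n x = ((real l - x) / (real l + 1)) * Q"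
      unfolding Pn_def Q_def using False l by (subst prod.remove[of _ l]) auto
    have ql: "1/4 \<le> (real l - x) / (real l + 1)"
      using False assms by (simp add: field_simps)
    have "(1/4) * Q \<le> ((real l - x) / (real l + 1)) * Q"
      using ql Q0 by (rule mult_right_mono)
    hence "Q \<le> 4 * Pn n x" using PQ by linarith
    have "\<bar>(-1 / (real l + 1)) * (\<Prod>i\<in>{..<n}-{l}. (real i - x) / (real i + 1))\<bar>
         = (1 / (real l + 1)) * (\<bar>x\<bar> * Q)" using e1 Q0 by (simp add: abs_mult)
    also have "\<dots> \<le> (1 / (real l + 1)) * ((1/2) * (4 * Pn n x))"
      using assms Q0 \<open>Q \<le> 4 * Pn n x\<close> by (intro mult_left_mono mult_mono) auto
    finally show ?thesis by simp
  qed
  have "\<bar>cfr' n x\<bar> \<le> (\<Sum>l<n. \<bar>(-1 / (real l + 1)) * (\<Prod>i\<in>{..<n}-{l}. (real i - x) / (real i + 1))\<bar>)"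
    unfolding cfr'_def by (rule sum_abs)
  also have "\<dots> \<le> (\<Sum>l<n. 2 * Pn n x * (1 / (real l + 1)))"
    by (intro sum_mono trm) auto
  also have "\<dots> = 2 * Pn n x * harm n"
    by (simp add: harm_altdef sum_distrib_left field_simps)
  finally show ?thesis by (simp add: mult_ac)
qed

lemma harm_le_ln: "harm n \<le> 1 + ln (real n + 1)"
proof (cases "n = 0")
  case True thus ?thesis by (simp add: harm_def)
next
  case False
  have "harm n - ln (real n) \<le> harm 1 - ln (real 1)"
    using False by (intro euler_mascheroni_sequence_decreasing) auto
  hence "harm n \<le> 1 + ln (real n)" by (simp add: harm_def)
  also have "ln (real n) \<le> ln (real n + 1)" using False by simp
  finally show ?thesis by simp
qed

lemma log_absorb:
  fixes y e :: real
  assumes "1 \<le> y" "0 < e"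
  shows "1 + ln y \<le> (1 + 1 / e) * y powr e"
proof -
  have "ln (y powr e) \<le> y powr e - 1" using assms by (intro ln_le_minus_one) auto
  hence "e * ln y \<le> y powr e" using assms by (simp add: ln_powr)
  hence "ln y \<le> y powr e / e" using assms by (simp add: field_simps)
  moreover have "1 \<le> y powr e" using assms by (simp add: ge_one_powr_ge_zero)
  ultimately show ?thesis by (simp add: field_simps)
qed

lemma dec_frac:
  assumes "-1/2 \<le> x" "x \<le> 1/2"
  shows "dec (1 + x) (frac_fps x)"
  unfolding dec_def using cfr_bound[OF assms] by (auto simp: frac_nth)

lemma dec_frac':
  assumes "-1/2 \<le> x" "x \<le> 1/2" "0 < e"
  shows "dec (1 + x - e) (Abs_fps (\<lambda>n. cfr' n x))"
proof -
  have "\<bar>cfr' n x\<bar> \<le> (2 * (1 + 1 / e) * exp (1 + x)) * (real n + 1) powr (-(1 + x - e))" for n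
  proof -
    have "\<bar>cfr' n x\<bar> \<le> 2 * harm n * Pn n x" by (rule cfr'_bound[OF assms(1,2)])
    also have "\<dots> \<le> 2 * (1 + ln (real n + 1)) * (exp (1 + x) * (real n + 1) powr (-(1 + x)))"
      using Pn_bound[of x n] assms harm_le_ln[of n] harm_nonneg[of n]
      by (intro mult_mono) auto
    also have "\<dots> \<le> 2 * ((1 + 1 / e) * (real n + 1) powr e) * (exp (1 + x) * (real n + 1) powr (-(1 + x)))"
      using log_absorb[of "real n + 1" e] assms by (intro mult_right_mono mult_left_mono) auto
    also have "\<dots> = (2 * (1 + 1 / e) * exp (1 + x)) * ((real n + 1) powr e * (real n + 1) powr (-(1 + x)))"
      by (simp add: mult_ac)
    also have "(real n + 1) powr e * (real n + 1) powr (-(1 + x)) = (real n + 1) powr (-(1 + x - e))"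
    proof -
      have "e + (-(1 + x)) = -(1 + x - e)" by simp
      thus ?thesis by (metis powr_add)
    qed
    finally show ?thesis .
  qed
  thus ?thesis unfolding dec_def by auto
qed





lemma cmap_mult:
  "Abs_fps (\<lambda>n. complex_of_real ((G * H) $ n)) = Abs_fps (\<lambda>n. complex_of_real (G $ n)) * Abs_fps (\<lambda>n. complex_of_real (H $ n))"
  by (rule fps_ext) (simp add: fps_mult_nth)

lemma dec_inverse:
  fixes F :: "real fps" and N :: nat and R :: real
  assumes F0: "F $ 0 = 1" and fin: "\<And>n. n > N \<Longrightarrow> F $ n = 0" and R: "1 < R"
    and roots: "\<And>z::complex. cmod z < R \<Longrightarrow> (\<Sum>i\<le>N. complex_of_real (F $ i) * z ^ i) \<noteq> 0"
  shows "dec 2 (inverse F)"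
proof -
  define cF where "cF = Abs_fps (\<lambda>n. complex_of_real (F $ n))"
  define cI where "cI = Abs_fps (\<lambda>n. complex_of_real (inverse F $ n))"
  have "cF * cI = Abs_fps (\<lambda>n. complex_of_real ((F * inverse F) $ n))"
    unfolding cF_def cI_def by (rule cmap_mult[symmetric])
  also have "F * inverse F = 1" using F0 by (simp add: inverse_mult_eq_1')
  also have "Abs_fps (\<lambda>n. complex_of_real ((1::real fps) $ n)) = 1"
    by (rule fps_ext) simp
  finally have inv: "inverse cF = cI" by (rule fps_inverse_unique)
  have rad: "fps_conv_radius cF = \<infinity>"
  proof -
    have "fps_conv_radius cF = conv_radius (\<lambda>n. complex_of_real (F $ n))"
      by (simp add: fps_conv_radius_def cF_def)
    also have "\<dots> = conv_radius (\<lambda>_. 0 :: complex)"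
      using fin by (intro conv_radius_cong) (auto simp: eventually_sequentially intro!: exI[of _ "Suc N"])
    finally show ?thesis by simp
  qed
  have ev: "eval_fps cF z = (\<Sum>i\<le>N. complex_of_real (F $ i) * z ^ i)" for z
    unfolding eval_fps_def cF_def using fin by (subst suminf_finite[of "{..N}"]) auto
  have "min (ereal R) (fps_conv_radius cF) \<le> fps_conv_radius (inverse cF)"
    using roots ev by (intro fps_conv_radius_inverse) auto
  hence radI: "ereal R \<le> fps_conv_radius cI" using rad inv by simp
  define s where "s = (1 + R) / 2"
  have s: "1 < s" "s < R" using R by (auto simp: s_def)
  have "ereal s < ereal R" using s by simp
  hence "ereal s < fps_conv_radius cI" using radI by (rule order_less_le_trans)
  moreover have "norm (complex_of_real s) = s" using s by simp
  ultimately have "norm (complex_of_real s) < fps_conv_radius cI" by simp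
  hence "summable (\<lambda>n. cI $ n * complex_of_real s ^ n)" by (rule summable_fps)
  hence "(\<lambda>n. cI $ n * complex_of_real s ^ n) \<longlonglongrightarrow> 0" by (rule summable_LIMSEQ_zero)
  hence "Bseq (\<lambda>n. cI $ n * complex_of_real s ^ n)" by (intro convergent_imp_Bseq convergentI)
  then obtain M where M: "M > 0" "\<And>n. norm (cI $ n * complex_of_real s ^ n) \<le> M"
    by (auto elim: BseqE)
  have "((\<lambda>n. (real n + 1)^2 / s^n) \<longlongrightarrow> 0) sequentially" using s(1) by real_asymp
  hence "Bseq (\<lambda>n. (real n + 1)^2 / s^n)" by (intro convergent_imp_Bseq convergentI)
  then obtain M2 where M2: "M2 > 0" "\<And>n. norm ((real n + 1)^2 / s^n) \<le> M2"
    by (auto elim: BseqE)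
  have "\<bar>inverse F $ n\<bar> \<le> (M * M2) * (real n + 1) powr (-2)" for n
  proof -
    have sp: "0 < s ^ n" using s by simp
    have a1: "\<bar>inverse F $ n\<bar> * s ^ n \<le> M"
      using M(2)[of n] s by (simp add: cI_def norm_mult norm_power)
    have a2: "(real n + 1)^2 \<le> M2 * s ^ n"
      using M2(2)[of n] sp by (simp add: field_simps)
    have "\<bar>inverse F $ n\<bar> * (real n + 1)^2 \<le> \<bar>inverse F $ n\<bar> * (M2 * s ^ n)"
      using a2 by (intro mult_left_mono) auto
    also have "\<dots> = M2 * (\<bar>inverse F $ n\<bar> * s ^ n)" by simp
    also have "\<dots> \<le> M2 * M" using a1 M2 by (intro mult_left_mono) auto
    finally have "\<bar>inverse F $ n\<bar> * (real n + 1)^2 \<le> M * M2" by (simp add: mult.commute)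
    hence le: "\<bar>inverse F $ n\<bar> \<le> (M * M2) / (real n + 1)^2"
      by (simp add: pos_le_divide_eq)
    have "(real n + 1) powr (-2) = 1 / (real n + 1)^2"
      by (simp add: powr_minus powr_realpow divide_inverse)
    hence "(M * M2) * (real n + 1) powr (-2) = (M * M2) / (real n + 1)^2" by simp
    thus ?thesis using le by simp
  qed
  thus ?thesis unfolding dec_def by blast
qed

lemma a_sum_eq: "(\<Sum>i\<le>p. complex_of_real (a_fps p \<theta> $ i) * z ^ i) = a_poly p \<theta> z"
proof -
  have "{..p} = insert 0 {1..p}" by auto
  hence "(\<Sum>i\<le>p. complex_of_real (a_fps p \<theta> $ i) * z ^ i)
      = complex_of_real (a_fps p \<theta> $ 0) + (\<Sum>i=1..p. complex_of_real (a_fps p \<theta> $ i) * z ^ i)"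
    by simp
  also have "(\<Sum>i=1..p. complex_of_real (a_fps p \<theta> $ i) * z ^ i) = (\<Sum>i=1..p. - (complex_of_real (\<theta> i) * z ^ i))"
    by (intro sum.cong) (auto simp: a_fps_def)
  finally show ?thesis by (simp add: a_fps_def a_poly_def sum_negf)
qed

lemma b_sum_eq: "(\<Sum>i\<le>q. complex_of_real (b_fps p q \<theta> $ i) * z ^ i) = b_poly p q \<theta> z"
proof -
  have "{..q} = insert 0 {1..q}" by auto
  hence "(\<Sum>i\<le>q. complex_of_real (b_fps p q \<theta> $ i) * z ^ i)
      = complex_of_real (b_fps p q \<theta> $ 0) + (\<Sum>i=1..q. complex_of_real (b_fps p q \<theta> $ i) * z ^ i)"
    by simp
  also have "(\<Sum>i=1..q. complex_of_real (b_fps p q \<theta> $ i) * z ^ i) = (\<Sum>i=1..q. - (complex_of_real (\<theta> (p + i)) * z ^ i))"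
    by (intro sum.cong) (auto simp: b_fps_def)
  finally show ?thesis by (simp add: b_fps_def b_poly_def sum_negf)
qed

lemma dec_inv_a:
  assumes "in_Theta p q \<delta> d1 d2 \<theta>" "0 < \<delta>"
  shows "dec 2 (inverse (a_fps p \<theta>))"
proof (rule dec_inverse[where N = p and R = "1 + \<delta>"])
  show "a_fps p \<theta> $ 0 = 1" by (simp add: a_fps_def)
  show "\<And>n. p < n \<Longrightarrow> a_fps p \<theta> $ n = 0" by (simp add: a_fps_def)
  show "1 < 1 + \<delta>" using assms by simp
  show "\<And>z. cmod z < 1 + \<delta> \<Longrightarrow> (\<Sum>i\<le>p. complex_of_real (a_fps p \<theta> $ i) * z ^ i) \<noteq> 0"
    using assms unfolding a_sum_eq in_Theta_def by force
qed

lemma dec_inv_b: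
  assumes "in_Theta p q \<delta> d1 d2 \<theta>" "0 < \<delta>"
  shows "dec 2 (inverse (b_fps p q \<theta>))"
proof (rule dec_inverse[where N = q and R = "1 + \<delta>"])
  show "b_fps p q \<theta> $ 0 = 1" by (simp add: b_fps_def)
  show "\<And>n. q < n \<Longrightarrow> b_fps p q \<theta> $ n = 0" by (simp add: b_fps_def)
  show "1 < 1 + \<delta>" using assms by simp
  show "\<And>z. cmod z < 1 + \<delta> \<Longrightarrow> (\<Sum>i\<le>q. complex_of_real (b_fps p q \<theta> $ i) * z ^ i) \<noteq> 0"
    using assms unfolding b_sum_eq in_Theta_def by force
qed




lemma lr_bound:
  fixes u :: "nat \<Rightarrow> real" and r :: ereal
  assumes u: "\<And>n. \<bar>u n\<bar> \<le> K0 * (real n + 1) powr (-s)" and s: "1/2 < s" and r: "2 \<le> r" and K0: "0 \<le> K0"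
  shows "lr_norm r u \<le> ereal (max K0 ((\<Sum>n. (K0 * (real n + 1) powr (-s)) powr real_of_ereal r) powr (1 / real_of_ereal r)))"
proof (cases "r = \<infinity>")
  case True
  have "(SUP n. ereal \<bar>u n\<bar>) \<le> ereal K0"
  proof (rule SUP_least)
    fix n
    have "(real n + 1) powr (-s) \<le> 1"
      using powr_mono2'[of "-s" 1 "real n + 1"] s by simp
    hence "K0 * (real n + 1) powr (-s) \<le> K0" using K0 by (simp add: mult_left_le)
    thus "ereal \<bar>u n\<bar> \<le> ereal K0" using u[of n] by simp
  qed
  thus ?thesis using True unfolding lr_norm_def by (simp add: order_trans)
next
  case False
  obtain \<rho> where rho: "r = ereal \<rho>" using False r by (cases r) auto
  have rho2: "2 \<le> \<rho>" using r rho by simp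
  have rr: "real_of_ereal r = \<rho>" using rho by simp
  define g where "g n = (K0 * (real n + 1) powr (-s)) powr \<rho>" for n
  have g_eq: "g n = K0 powr \<rho> * (real (Suc n)) powr (- (s * \<rho>))" for n
  proof -
    have "g n = K0 powr \<rho> * ((real n + 1) powr (-s)) powr \<rho>"
      unfolding g_def using K0 by (simp add: powr_mult)
    also have "((real n + 1) powr (-s)) powr \<rho> = (real n + 1) powr (- (s * \<rho>))"
      by (simp add: powr_powr)
    finally show ?thesis by (simp add: add.commute)
  qed
  have "summable (\<lambda>n. real n powr (- (s * \<rho>)))"
    using s rho2 by (subst summable_real_powr_iff) (auto intro: order_less_le_trans[of _ "2 * s"] simp: mult_mono)
  hence "summable (\<lambda>n. real (Suc n) powr (- (s * \<rho>)))"
    by (subst summable_Suc_iff)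
  hence sg: "summable g" unfolding g_eq by (intro summable_mult)
  have ug: "\<bar>u n\<bar> powr \<rho> \<le> g n" for n
    unfolding g_def using u[of n] rho2 by (intro powr_mono2) auto
  have su: "summable (\<lambda>n. \<bar>u n\<bar> powr \<rho>)"
    by (rule summable_comparison_test[OF _ sg]) (use ug in auto)
  have "(\<Sum>n. \<bar>u n\<bar> powr \<rho>) \<le> (\<Sum>n. g n)"
    by (rule suminf_le[OF ug su sg])
  moreover have "0 \<le> (\<Sum>n. \<bar>u n\<bar> powr \<rho>)" by (intro suminf_nonneg su) auto
  ultimately have "(\<Sum>n. \<bar>u n\<bar> powr \<rho>) powr (1 / \<rho>) \<le> (\<Sum>n. g n) powr (1 / \<rho>)"
    using rho2 by (intro powr_mono2) auto
  hence "lr_norm r u \<le> ereal ((\<Sum>n. g n) powr (1 / \<rho>))"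
    unfolding lr_norm_def using False su rr by simp
  also have "\<dots> \<le> ereal (max K0 ((\<Sum>n. (K0 * (real n + 1) powr (-s)) powr real_of_ereal r) powr (1 / real_of_ereal r)))"
    unfolding rr g_def by simp
  finally show ?thesis .
qed

definition Aprime :: "nat \<Rightarrow> nat \<Rightarrow> real fps" where
  "Aprime p k = Abs_fps (\<lambda>n. if 1 \<le> n \<and> n \<le> p \<and> n = k then -1 else 0)"

definition Bprime :: "nat \<Rightarrow> nat \<Rightarrow> nat \<Rightarrow> real fps" where
  "Bprime p q k = Abs_fps (\<lambda>n. if 1 \<le> n \<and> n \<le> q \<and> p + n = k then -1 else 0)"

definition Fprime :: "nat \<Rightarrow> nat \<Rightarrow> nat \<Rightarrow> real \<Rightarrow> real fps" where
  "Fprime p q k d = (if k = p + q + 1 then Abs_fps (\<lambda>n. cfr' n d) else 0)"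

lemma fd_a: "fd (\<lambda>x. a_fps p (\<theta>(k := x))) (Aprime p k) (\<theta> k)"
  unfolding fd_def
proof
  fix n
  show "((\<lambda>x. a_fps p (\<theta>(k := x)) $ n) has_real_derivative Aprime p k $ n) (at (\<theta> k))"
  proof (cases "1 \<le> n \<and> n \<le> p \<and> n = k")
    case True
    have "(\<lambda>x. a_fps p (\<theta>(k := x)) $ n) = (\<lambda>x. - x)" using True by (auto simp: a_fps_def fun_eq_iff)
    moreover have "Aprime p k $ n = -1" using True by (simp add: Aprime_def)
    ultimately show ?thesis by (auto intro!: derivative_eq_intros)
  next
    case False
    have "(\<lambda>x. a_fps p (\<theta>(k := x)) $ n) = (\<lambda>x. a_fps p \<theta> $ n)" using False by (auto simp: a_fps_def fun_eq_iff)
    moreover have "Aprime p k $ n = 0" using False by (auto simp: Aprime_def)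
    ultimately show ?thesis by simp
  qed
qed

lemma fd_b: "fd (\<lambda>x. b_fps p q (\<theta>(k := x))) (Bprime p q k) (\<theta> k)"
  unfolding fd_def
proof
  fix n
  show "((\<lambda>x. b_fps p q (\<theta>(k := x)) $ n) has_real_derivative Bprime p q k $ n) (at (\<theta> k))"
  proof (cases "1 \<le> n \<and> n \<le> q \<and> p + n = k")
    case True
    have "(\<lambda>x. b_fps p q (\<theta>(k := x)) $ n) = (\<lambda>x. - x)" using True by (auto simp: b_fps_def fun_eq_iff)
    moreover have "Bprime p q k $ n = -1" using True by (simp add: Bprime_def)
    ultimately show ?thesis by (auto intro!: derivative_eq_intros)
  next
    case False
    have "(\<lambda>x. b_fps p q (\<theta>(k := x)) $ n) = (\<lambda>x. b_fps p q \<theta> $ n)" using False by (auto simp: b_fps_def fun_eq_iff)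
    moreover have "Bprime p q k $ n = 0" using False by (auto simp: Bprime_def)
    ultimately show ?thesis by simp
  qed
qed

lemma fd_fr: "fd (\<lambda>x. frac_fps ((\<theta>(k := x)) (p + q + 1))) (Fprime p q k (\<theta> k)) (\<theta> k)"
proof (cases "k = p + q + 1")
  case True
  show ?thesis unfolding fd_def
  proof
    fix n
    have "(\<lambda>x. frac_fps ((\<theta>(k := x)) (p + q + 1)) $ n) = (\<lambda>x. cfr n x)"
      using True by (simp add: frac_nth)
    moreover have "Fprime p q k (\<theta> k) $ n = cfr' n (\<theta> k)" using True by (simp add: Fprime_def)
    ultimately show "((\<lambda>x. frac_fps ((\<theta>(k := x)) (p + q + 1)) $ n) has_real_derivative Fprime p q k (\<theta> k) $ n) (at (\<theta> k))"
      using cfr_deriv by simp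
  qed
next
  case False
  have "(\<lambda>x. frac_fps ((\<theta>(k := x)) (p + q + 1))) = (\<lambda>x. frac_fps (\<theta> (p + q + 1)))"
    using False by auto
  moreover have "Fprime p q k (\<theta> k) = 0" using False by (simp add: Fprime_def)
  ultimately show ?thesis using fd_const by simp
qed

definition Dg :: "nat \<Rightarrow> nat \<Rightarrow> nat \<Rightarrow> (nat \<Rightarrow> real) \<Rightarrow> real fps" where
  "Dg p q k \<theta> =
     ((- (inverse (b_fps p q \<theta>) * inverse (b_fps p q \<theta>) * Bprime p q k)) * a_fps p \<theta>
        + inverse (b_fps p q \<theta>) * Aprime p k) * frac_fps (\<theta> (p + q + 1))
     + (inverse (b_fps p q \<theta>) * a_fps p \<theta>) * Fprime p q k (\<theta> k)"

lemma fd_gamma: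
  "fd (\<lambda>x. inverse (b_fps p q (\<theta>(k := x))) * a_fps p (\<theta>(k := x)) * frac_fps ((\<theta>(k := x)) (p + q + 1)))
      (Dg p q k \<theta>) (\<theta> k)"
proof -
  have b0: "\<And>x. b_fps p q (\<theta>(k := x)) $ 0 = 1" by (simp add: b_fps_def)
  note 1 = fd_inverse[OF b0 fd_b[of p q \<theta> k]]
  note 2 = fd_mult[OF 1 fd_a[of p \<theta> k]]
  note 3 = fd_mult[OF 2 fd_fr[of \<theta> k p q]]
  show ?thesis using 3 unfolding Dg_def fun_upd_triv .
qed

lemma dec_Dg:
  assumes I: "dec 2 (inverse (b_fps p q \<theta>))" and a: "0 < \<alpha>" "\<alpha> < 1" "\<alpha> < 1 + \<theta> (p + q + 1)"
    and d: "-1/2 \<le> \<theta> (p + q + 1)" "\<theta> (p + q + 1) \<le> 1/2"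
  shows "dec \<alpha> (Dg p q k \<theta>)"
proof -
  have B': "dec 2 (Bprime p q k)" by (rule dec_fin[where N = q]) (auto simp: Bprime_def)
  have A': "dec 2 (Aprime p k)" by (rule dec_fin[where N = p]) (auto simp: Aprime_def)
  have A: "dec 2 (a_fps p \<theta>)" by (rule dec_fin[where N = p]) (auto simp: a_fps_def)
  have T1: "dec 2 (inverse (b_fps p q \<theta>) * inverse (b_fps p q \<theta>) * Bprime p q k)"
    by (intro dec_mult_ff I B')
  have T2: "dec 2 ((- (inverse (b_fps p q \<theta>) * inverse (b_fps p q \<theta>) * Bprime p q k)) * a_fps p \<theta>
        + inverse (b_fps p q \<theta>) * Aprime p k)"
    by (intro dec_add dec_mult_ff dec_uminus T1 A I A')
  have Fr: "dec \<alpha> (frac_fps (\<theta> (p + q + 1)))"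
    by (rule dec_mono[OF dec_frac[OF d]]) (use a in simp)
  have T5: "dec \<alpha> (((- (inverse (b_fps p q \<theta>) * inverse (b_fps p q \<theta>) * Bprime p q k)) * a_fps p \<theta>
        + inverse (b_fps p q \<theta>) * Aprime p k) * frac_fps (\<theta> (p + q + 1)))"
    by (rule dec_mult_fast[OF T2 Fr]) (use a in auto)
  have F': "dec \<alpha> (Fprime p q k (\<theta> k))"
  proof (cases "k = p + q + 1")
    case True
    have "dec (1 + \<theta> (p + q + 1) - (1 + \<theta> (p + q + 1) - \<alpha>)) (Abs_fps (\<lambda>n. cfr' n (\<theta> (p + q + 1))))"
      using a d by (intro dec_frac') auto
    thus ?thesis using True by (simp add: Fprime_def)
  next
    case False thus ?thesis by (simp add: Fprime_def dec_zero)
  qed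
  have T7: "dec \<alpha> ((inverse (b_fps p q \<theta>) * a_fps p \<theta>) * Fprime p q k (\<theta> k))"
    by (rule dec_mult_fast[OF dec_mult_ff[OF I A] F']) (use a in auto)
  show ?thesis unfolding Dg_def by (rule dec_add[OF T5 T7])
qed

lemma deriv_gamma_t:
  "deriv (\<lambda>x. gamma_t p q t (\<theta>(k := x)) j) (\<theta> k) = (if j + 1 \<le> t then Dg p q k \<theta> $ j else 0)"
proof (cases "j + 1 \<le> t")
  case True
  have "(\<lambda>x. gamma_t p q t (\<theta>(k := x)) j) =
        (\<lambda>x. (inverse (b_fps p q (\<theta>(k := x))) * a_fps p (\<theta>(k := x)) * frac_fps ((\<theta>(k := x)) (p + q + 1))) $ j)"
    using True by (simp add: gamma_t_def gamma_def)
  moreover have "((\<lambda>x. (inverse (b_fps p q (\<theta>(k := x))) * a_fps p (\<theta>(k := x)) * frac_fps ((\<theta>(k := x)) (p + q + 1))) $ j)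
      has_real_derivative Dg p q k \<theta> $ j) (at (\<theta> k))"
    using fd_gamma unfolding fd_def by blast
  ultimately show ?thesis using True by (simp add: DERIV_imp_deriv)
next
  case False
  have "(\<lambda>x. gamma_t p q t (\<theta>(k := x)) j) = (\<lambda>x. 0)"
    using False by (simp add: gamma_t_def)
  thus ?thesis using False by simp
qed




theorem lemma2:
  fixes p q :: nat and a b :: "nat \<Rightarrow> real" and d0 d1 d2 \<delta> :: real
    and \<theta> :: "nat \<Rightarrow> real" and r :: ereal and k :: nat
  defines "\<theta>0 \<equiv> (\<lambda>i. if 1 \<le> i \<and> i \<le> p then a i
                     else if p + 1 \<le> i \<and> i \<le> p + q then b (i - p)
                     else if i = p + q + 1 then d0 else 0)"
  assumes d0: "-1/2 < d0" "d0 < 1/2"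
    and a_roots: "\<forall>z. 1 - (\<Sum>i=1..p. complex_of_real (a i) * z ^ i) = 0 \<longrightarrow> 1 < cmod z"
    and b_roots: "\<forall>z. 1 - (\<Sum>j=1..q. complex_of_real (b j) * z ^ j) = 0 \<longrightarrow> 1 < cmod z"
    and coprime: "\<not> (\<exists>z. 1 - (\<Sum>i=1..p. complex_of_real (a i) * z ^ i) = 0 \<and>
                          1 - (\<Sum>j=1..q. complex_of_real (b j) * z ^ j) = 0)"
    and delta: "0 < \<delta>"
    and d12: "-1/2 < d1" "d1 \<le> d2" "d2 < 1/2" "d1 - d0 > -1/2"
    and theta0: "in_Theta p q \<delta> d1 d2 \<theta>0"
    and theta: "in_Theta p q \<delta> d1 d2 \<theta>"
    and r: "2 \<le> r"
    and k: "1 \<le> k" "k \<le> p + q + 1"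
  shows "\<exists>K::real. \<forall>t\<ge>1. lr_norm r (dlambda p q t k \<theta> \<theta>0) \<le> ereal K"
proof -
  define d where "d = \<theta> (p + q + 1)"
  have th0d: "\<theta>0 (p + q + 1) = d0" by (simp add: \<theta>0_def)
  have dr: "d1 \<le> d" "d \<le> d2" using theta by (simp_all add: in_Theta_def d_def)
  define \<alpha>0 where "\<alpha>0 = min 1 (1 + d)"
  define \<beta>0 where "\<beta>0 = min 1 (1 - d0)"
  have sum0: "\<alpha>0 + \<beta>0 > 3/2"
    using dr d12 d0 unfolding \<alpha>0_def \<beta>0_def min_def by auto
  define \<epsilon> where "\<epsilon> = (\<alpha>0 + \<beta>0 - 3/2) / 4"
  define \<alpha> where "\<alpha> = \<alpha>0 - \<epsilon>"
  define \<beta> where "\<beta> = \<beta>0 - \<epsilon>"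
  have eps: "0 < \<epsilon>" using sum0 by (simp add: \<epsilon>_def)
  have a0le: "\<alpha>0 \<le> 1" "\<alpha>0 \<le> 1 + d" "\<beta>0 \<le> 1" "\<beta>0 \<le> 1 - d0"
    by (simp_all add: \<alpha>0_def \<beta>0_def)
  have hal: "1/2 < \<alpha>0" "1/2 < \<beta>0"
    using dr d12 d0 unfolding \<alpha>0_def \<beta>0_def min_def by auto
  have al1: "0 < \<alpha>" using eps a0le sum0 hal unfolding \<alpha>_def \<epsilon>_def by argo
  have al2: "\<alpha> < 1" using eps a0le sum0 hal unfolding \<alpha>_def \<epsilon>_def by argo
  have al3: "\<alpha> < 1 + d" using eps a0le sum0 hal unfolding \<alpha>_def \<epsilon>_def by argo
  note al = al1 al2 al3
  have be1: "0 < \<beta>" using eps a0le sum0 hal unfolding \<beta>_def \<epsilon>_def by argo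
  have be2: "\<beta> < 1" using eps a0le sum0 hal unfolding \<beta>_def \<epsilon>_def by argo
  have be3: "\<beta> \<le> 1 - d0" using eps a0le sum0 hal unfolding \<beta>_def \<epsilon>_def by argo
  note be = be1 be2 be3
  have s: "1/2 < \<alpha> + \<beta> - 1"
    using eps sum0 unfolding \<alpha>_def \<beta>_def \<epsilon>_def by argo
  have I: "dec 2 (inverse (b_fps p q \<theta>))" by (rule dec_inv_b[OF theta delta])
  have DD: "dec \<alpha> (Dg p q k \<theta>)"
    by (rule dec_Dg[OF I]) (use al dr d12 in \<open>auto simp: d_def\<close>)
  define E where "E = frac_fps (- \<theta>0 (p + q + 1)) * inverse (a_fps p \<theta>0) * b_fps p q \<theta>0"
  have Fr0: "dec \<beta> (frac_fps (- \<theta>0 (p + q + 1)))"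
    by (rule dec_mono[OF dec_frac]) (use be d0 th0d in auto)
  have B0: "dec 2 (b_fps p q \<theta>0)" by (rule dec_fin[where N = q]) (auto simp: b_fps_def)
  have EE: "dec \<beta> E" unfolding E_def
    by (rule dec_mult_fast'[OF dec_mult_fast'[OF Fr0 dec_inv_a[OF theta0 delta]] B0]) (use be in auto)
  obtain C1 where C1: "C1 \<ge> 0" "\<And>n. \<bar>Dg p q k \<theta> $ n\<bar> \<le> C1 * (real n + 1) powr (-\<alpha>)"
    using DD decE by blast
  obtain C2 where C2: "C2 \<ge> 0" "\<And>n. \<bar>E $ n\<bar> \<le> C2 * (real n + 1) powr (-\<beta>)"
    using EE decE by blast
  define KK where "KK = 2 powr \<alpha> / (1 - \<beta>) + 2 powr \<beta> / (1 - \<alpha>)"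
  have KK0: "0 \<le> KK" using al be by (simp add: KK_def)
  have eta_eq: "eta p q \<theta>0 i = E $ i" for i by (simp add: eta_def E_def)
  have bnd: "\<bar>dlambda p q t k \<theta> \<theta>0 n\<bar> \<le> (C1 * C2 * KK) * (real n + 1) powr (-(\<alpha> + \<beta> - 1))" for t n
  proof -
    have "\<bar>dlambda p q t k \<theta> \<theta>0 n\<bar> = \<bar>\<Sum>j\<le>n. (if j + 1 \<le> t then Dg p q k \<theta> $ j else 0) * E $ (n - j)\<bar>"
      by (simp add: dlambda_def deriv_gamma_t eta_eq)
    also have "\<dots> \<le> (\<Sum>j\<le>n. \<bar>(if j + 1 \<le> t then Dg p q k \<theta> $ j else 0) * E $ (n - j)\<bar>)"
      by (rule sum_abs)
    also have "\<dots> \<le> (\<Sum>j\<le>n. (C1 * (real j + 1) powr (-\<alpha>)) * (C2 * (real (n - j) + 1) powr (-\<beta>)))"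
    proof (rule sum_mono)
      fix j assume "j \<in> {..n}"
      have "\<bar>(if j + 1 \<le> t then Dg p q k \<theta> $ j else 0)\<bar> \<le> C1 * (real j + 1) powr (-\<alpha>)"
        using C1 by auto
      thus "\<bar>(if j + 1 \<le> t then Dg p q k \<theta> $ j else 0) * E $ (n - j)\<bar>
          \<le> (C1 * (real j + 1) powr (-\<alpha>)) * (C2 * (real (n - j) + 1) powr (-\<beta>))"
        unfolding abs_mult using C2(2)[of "n - j"] by (intro mult_mono) auto
    qed
    also have "\<dots> = C1 * C2 * (\<Sum>j\<le>n. (real j + 1) powr (-\<alpha>) * (real (n - j) + 1) powr (-\<beta>))"
      by (simp add: sum_distrib_left mult_ac)
    also have "\<dots> \<le> C1 * C2 * (KK * (real n + 1) powr (-(\<alpha> + \<beta> - 1)))"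
      unfolding KK_def using C1 C2 al be by (intro mult_left_mono conv_bound) auto
    finally show ?thesis by (simp add: mult_ac)
  qed
  have K0: "0 \<le> C1 * C2 * KK" using C1 C2 KK0 by simp
  have "lr_norm r (dlambda p q t k \<theta> \<theta>0) \<le> ereal (max (C1 * C2 * KK)
        ((\<Sum>n. (C1 * C2 * KK * (real n + 1) powr (-(\<alpha> + \<beta> - 1))) powr real_of_ereal r)
          powr (1 / real_of_ereal r)))" for t
    by (rule lr_bound[OF bnd[of t] s r K0])
  thus ?thesis by blast
qed


end
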